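(* Let $A,B$ be rings and $M$ a $B$-$A$ bimodule. If either (1) $M$ is a separable bimodule, or (2) the evaluation map $\mathrm{ev}_M:M\otimes_A{}^*M\to B$ is injective, then $M$ is a formally smooth bimodule.
   Context: Left $B$-linear maps are written on the right of arguments; ${}^*M:={}_B\mathrm{Hom}(M,B)$ is an $A$-$B$ bimodule via $(m)(afb)=((ma)f)b$; $\mathrm{ev}_M(m\otimes_Af)=(m)f$ is a $B$-bimodule map. $M$ is separable if $\mathrm{ev}_M$ is a split epimorphism of $B$-bimodules. $\mathcal{E}_{M,B}$ is the class of $B$-bimodule maps $f:Y\to Y'$ such that ${}_B\mathrm{Hom}(M,f):{}_B\mathrm{Hom}(M,Y)\to{}_B\mathrm{Hom}(M,Y')$ has a right inverse as an $A$-$B$ bimodule map. A $B$-bimodule $P$ is $\mathcal{E}_{M,B}$-projective if for every $f:Y\to Y'$ in $\mathcal{E}_{M,B}$ every $B$-bimodule map $P\to Y'$ factors through $f$. $M$ is a formally smooth bimodule if $\mathrm{Ker}(\mathrm{ev}_M)$ is an $\mathcal{E}_{M,B}$-projective $B$-bimodule. *)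

theory Defs
  imports Main "HOL-Library.Function_Algebras"
begin

section \<open>Bimodules (carrier = whole type)\<close>

definition bimodule :: "('r::ring_1 \<Rightarrow> 'x::ab_group_add \<Rightarrow> 'x) \<Rightarrow> ('x \<Rightarrow> 's::ring_1 \<Rightarrow> 'x) \<Rightarrow> bool" where
  "bimodule l r \<longleftrightarrow>
     (\<forall>a x y. l a (x + y) = l a x + l a y) \<and>
     (\<forall>a b x. l (a + b) x = l a x + l b x) \<and>
     (\<forall>a b x. l (a * b) x = l a (l b x)) \<and>
     (\<forall>x. l 1 x = x) \<and>
     (\<forall>s x y. r (x + y) s = r x s + r y s) \<and>
     (\<forall>s t x. r x (s + t) = r x s + r x t) \<and>
     (\<forall>s t x. r x (s * t) = r (r x s) t) \<and>
     (\<forall>x. r x 1 = x) \<and>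
     (\<forall>a x s. l a (r x s) = r (l a x) s)"

definition bihom ::
  "'x set \<Rightarrow> 'y set \<Rightarrow> ('x \<Rightarrow> 'x \<Rightarrow> 'x) \<Rightarrow> ('y \<Rightarrow> 'y \<Rightarrow> 'y) \<Rightarrow>
   ('r \<Rightarrow> 'x \<Rightarrow> 'x) \<Rightarrow> ('r \<Rightarrow> 'y \<Rightarrow> 'y) \<Rightarrow> ('x \<Rightarrow> 's \<Rightarrow> 'x) \<Rightarrow> ('y \<Rightarrow> 's \<Rightarrow> 'y) \<Rightarrow>
   ('x \<Rightarrow> 'y) \<Rightarrow> bool" where
  "bihom S T addS addT lS lT rS rT \<phi> \<longleftrightarrow>
     (\<forall>x\<in>S. \<phi> x \<in> T) \<and>
     (\<forall>x\<in>S. \<forall>y\<in>S. \<phi> (addS x y) = addT (\<phi> x) (\<phi> y)) \<and>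
     (\<forall>a. \<forall>x\<in>S. \<phi> (lS a x) = lT a (\<phi> x)) \<and>
     (\<forall>s. \<forall>x\<in>S. \<phi> (rS x s) = rT (\<phi> x) s)"

text \<open>{}_B Hom(M,Y): additive maps h with h(b m) = b h(m). (Written as functions; the
  paper writes them on the right.)\<close>
definition lhom :: "('b \<Rightarrow> 'm::ab_group_add \<Rightarrow> 'm) \<Rightarrow> ('b \<Rightarrow> 'y::ab_group_add \<Rightarrow> 'y) \<Rightarrow> ('m \<Rightarrow> 'y) set" where
  "lhom lM lY = {h. (\<forall>x y. h (x + y) = h x + h y) \<and> (\<forall>b x. h (lM b x) = lY b (h x))}"

definition dual :: "('b::ring_1 \<Rightarrow> 'm::ab_group_add \<Rightarrow> 'm) \<Rightarrow> ('m \<Rightarrow> 'b) set" where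
  "dual lM = lhom lM (*)"

text \<open>A-B bimodule structure on {}_B Hom(M,Y): (m)(a h b) = ((m a) h) b.\<close>
definition hom_lact :: "('m \<Rightarrow> 'a \<Rightarrow> 'm) \<Rightarrow> 'a \<Rightarrow> ('m \<Rightarrow> 'y) \<Rightarrow> ('m \<Rightarrow> 'y)" where
  "hom_lact rM a h = (\<lambda>m. h (rM m a))"

definition hom_ract :: "('y \<Rightarrow> 'b \<Rightarrow> 'y) \<Rightarrow> ('m \<Rightarrow> 'y) \<Rightarrow> 'b \<Rightarrow> ('m \<Rightarrow> 'y)" where
  "hom_ract rY h b = (\<lambda>m. rY (h m) b)"

section \<open>The tensor product M \<otimes>_A {}^*M, constructed as a quotient of a free abelian group\<close>

text \<open>Free abelian group on pairs (m,f) with f in the dual: finitely supported integer functions.\<close>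
definition freeT :: "('b::ring_1 \<Rightarrow> 'm::ab_group_add \<Rightarrow> 'm) \<Rightarrow> ('m \<times> ('m \<Rightarrow> 'b) \<Rightarrow> int) set" where
  "freeT lM = {u. finite {x. u x \<noteq> 0} \<and> (\<forall>x. u x \<noteq> 0 \<longrightarrow> snd x \<in> dual lM)}"

definition delta :: "'x \<Rightarrow> ('x \<Rightarrow> int)" where
  "delta x = (\<lambda>y. if y = x then 1 else 0)"

text \<open>Generators of the relations: biadditivity and A-balancedness, (m a) \<otimes> f = m \<otimes> (a f).\<close>
definition tens_rels ::
  "('b::ring_1 \<Rightarrow> 'm::ab_group_add \<Rightarrow> 'm) \<Rightarrow> ('m \<Rightarrow> 'a \<Rightarrow> 'm) \<Rightarrow> ('m \<times> ('m \<Rightarrow> 'b) \<Rightarrow> int) set" where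
  "tens_rels lM rM =
     {delta (m + m', f) - delta (m, f) - delta (m', f) | m m' f. f \<in> dual lM} \<union>
     {delta (m, f + g) - delta (m, f) - delta (m, g) | m f g. f \<in> dual lM \<and> g \<in> dual lM} \<union>
     {delta (rM m a, f) - delta (m, hom_lact rM a f) | m a f. f \<in> dual lM}"

inductive_set gen_subgroup :: "('x::ab_group_add) set \<Rightarrow> 'x set" for G where
  zero: "0 \<in> gen_subgroup G"
| gen: "g \<in> G \<Longrightarrow> g \<in> gen_subgroup G"
| add: "u \<in> gen_subgroup G \<Longrightarrow> v \<in> gen_subgroup G \<Longrightarrow> u + v \<in> gen_subgroup G"
| neg: "u \<in> gen_subgroup G \<Longrightarrow> - u \<in> gen_subgroup G"

definition tcls :: "('b::ring_1 \<Rightarrow> 'm::ab_group_add \<Rightarrow> 'm) \<Rightarrow> ('m \<Rightarrow> 'a \<Rightarrow> 'm) \<Rightarrow>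
    ('m \<times> ('m \<Rightarrow> 'b) \<Rightarrow> int) \<Rightarrow> ('m \<times> ('m \<Rightarrow> 'b) \<Rightarrow> int) set" where
  "tcls lM rM u = {v \<in> freeT lM. u - v \<in> gen_subgroup (tens_rels lM rM)}"

text \<open>Carrier of M \<otimes>_A {}^*M: the equivalence classes.\<close>
definition tensor :: "('b::ring_1 \<Rightarrow> 'm::ab_group_add \<Rightarrow> 'm) \<Rightarrow> ('m \<Rightarrow> 'a \<Rightarrow> 'm) \<Rightarrow>
    ('m \<times> ('m \<Rightarrow> 'b) \<Rightarrow> int) set set" where
  "tensor lM rM = tcls lM rM ` freeT lM"

definition trep :: "'u set \<Rightarrow> 'u" where
  "trep X = (SOME u. u \<in> X)"

definition push :: "('x \<Rightarrow> 'z) \<Rightarrow> ('x \<Rightarrow> int) \<Rightarrow> ('z \<Rightarrow> int)" where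
  "push h u = (\<lambda>z. \<Sum>x\<in>{x. u x \<noteq> 0 \<and> h x = z}. u x)"

definition tadd :: "('b::ring_1 \<Rightarrow> 'm::ab_group_add \<Rightarrow> 'm) \<Rightarrow> ('m \<Rightarrow> 'a \<Rightarrow> 'm) \<Rightarrow>
    ('m \<times> ('m \<Rightarrow> 'b) \<Rightarrow> int) set \<Rightarrow> ('m \<times> ('m \<Rightarrow> 'b) \<Rightarrow> int) set \<Rightarrow> ('m \<times> ('m \<Rightarrow> 'b) \<Rightarrow> int) set" where
  "tadd lM rM X Y = tcls lM rM (trep X + trep Y)"

text \<open>B-bimodule structure: b (m \<otimes> f) = (b m) \<otimes> f and (m \<otimes> f) b = m \<otimes> (f b).\<close>
definition tlact :: "('b::ring_1 \<Rightarrow> 'm::ab_group_add \<Rightarrow> 'm) \<Rightarrow> ('m \<Rightarrow> 'a \<Rightarrow> 'm) \<Rightarrow>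
    'b \<Rightarrow> ('m \<times> ('m \<Rightarrow> 'b) \<Rightarrow> int) set \<Rightarrow> ('m \<times> ('m \<Rightarrow> 'b) \<Rightarrow> int) set" where
  "tlact lM rM b X = tcls lM rM (push (\<lambda>(m, f). (lM b m, f)) (trep X))"

definition tract :: "('b::ring_1 \<Rightarrow> 'm::ab_group_add \<Rightarrow> 'm) \<Rightarrow> ('m \<Rightarrow> 'a \<Rightarrow> 'm) \<Rightarrow>
    ('m \<times> ('m \<Rightarrow> 'b) \<Rightarrow> int) set \<Rightarrow> 'b \<Rightarrow> ('m \<times> ('m \<Rightarrow> 'b) \<Rightarrow> int) set" where
  "tract lM rM X b = tcls lM rM (push (\<lambda>(m, f). (m, hom_ract (*) f b)) (trep X))"

text \<open>Evaluation map ev_M(m \<otimes> f) = (m)f.\<close>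
definition evF :: "('m \<times> ('m \<Rightarrow> 'b::ring_1) \<Rightarrow> int) \<Rightarrow> 'b" where
  "evF u = (\<Sum>x\<in>{x. u x \<noteq> 0}. of_int (u x) * snd x (fst x))"

definition ev :: "('m \<times> ('m \<Rightarrow> 'b::ring_1) \<Rightarrow> int) set \<Rightarrow> 'b" where
  "ev X = evF (trep X)"

definition ker_ev :: "('b::ring_1 \<Rightarrow> 'm::ab_group_add \<Rightarrow> 'm) \<Rightarrow> ('m \<Rightarrow> 'a \<Rightarrow> 'm) \<Rightarrow>
    ('m \<times> ('m \<Rightarrow> 'b) \<Rightarrow> int) set set" where
  "ker_ev lM rM = {X \<in> tensor lM rM. ev X = 0}"

definition separable_bimod :: "('b::ring_1 \<Rightarrow> 'm::ab_group_add \<Rightarrow> 'm) \<Rightarrow> ('m \<Rightarrow> 'a::ring_1 \<Rightarrow> 'm) \<Rightarrow> bool" where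
  "separable_bimod lM rM \<longleftrightarrow>
     (\<exists>s. bihom UNIV (tensor lM rM) (+) (tadd lM rM) (*) (tlact lM rM) (*) (tract lM rM) s
          \<and> (\<forall>b. ev (s b) = b))"

definition E_class ::
  "('b::ring_1 \<Rightarrow> 'm::ab_group_add \<Rightarrow> 'm) \<Rightarrow> ('m \<Rightarrow> 'a::ring_1 \<Rightarrow> 'm) \<Rightarrow>
   ('b \<Rightarrow> 'y::ab_group_add \<Rightarrow> 'y) \<Rightarrow> ('y \<Rightarrow> 'b \<Rightarrow> 'y) \<Rightarrow>
   ('b \<Rightarrow> 'z::ab_group_add \<Rightarrow> 'z) \<Rightarrow> ('z \<Rightarrow> 'b \<Rightarrow> 'z) \<Rightarrow> ('y \<Rightarrow> 'z) \<Rightarrow> bool" where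
  "E_class lM rM lY rY lZ rZ f \<longleftrightarrow>
     bihom UNIV UNIV (+) (+) lY lZ rY rZ f \<and>
     (\<exists>g. bihom (lhom lM lZ) (lhom lM lY) (+) (+) (hom_lact rM) (hom_lact rM)
               (hom_ract rZ) (hom_ract rY) g \<and>
          (\<forall>h\<in>lhom lM lZ. f \<circ> g h = h))"

text \<open>E_{M,B}-projectivity of Ker(ev_M), relative to B-bimodules Y, Y' living on the types
  'y and 'z; the theorem quantifies over all such types.\<close>
definition formally_smooth ::
  "('b::ring_1 \<Rightarrow> 'm::ab_group_add \<Rightarrow> 'm) \<Rightarrow> ('m \<Rightarrow> 'a::ring_1 \<Rightarrow> 'm) \<Rightarrow>
   'y::ab_group_add itself \<Rightarrow> 'z::ab_group_add itself \<Rightarrow> bool" where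
  "formally_smooth lM rM (TYPE('y)) (TYPE('z)) \<longleftrightarrow>
     (\<forall>(lY :: 'b \<Rightarrow> 'y \<Rightarrow> 'y) rY (lZ :: 'b \<Rightarrow> 'z \<Rightarrow> 'z) rZ f \<phi>.
        bimodule lY rY \<and> bimodule lZ rZ \<and> E_class lM rM lY rY lZ rZ f \<and>
        bihom (ker_ev lM rM) UNIV (tadd lM rM) (+) (tlact lM rM) lZ (tract lM rM) rZ \<phi>
        \<longrightarrow> (\<exists>\<psi>. bihom (ker_ev lM rM) UNIV (tadd lM rM) (+) (tlact lM rM) lY (tract lM rM) rY \<psi>
                 \<and> (\<forall>X\<in>ker_ev lM rM. f (\<psi> X) = \<phi> X)))"

end

theory Submission
  imports Defs
begin


definition fs :: "('x \<Rightarrow> int) \<Rightarrow> bool" where "fs u \<longleftrightarrow> finite {x. u x \<noteq> 0}"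

lemma fs_add: "fs u \<Longrightarrow> fs v \<Longrightarrow> fs (u + v)"
  unfolding fs_def by (rule finite_subset[of _ "{x. u x \<noteq> 0} \<union> {x. v x \<noteq> 0}"]) auto
lemma fs_neg: "fs u \<Longrightarrow> fs (- u)"
  unfolding fs_def by simp
lemma fs_diff: "fs u \<Longrightarrow> fs v \<Longrightarrow> fs (u - v)"
  using fs_add[of u "-v"] fs_neg[of v] by simp
lemma fs_zero: "fs 0" unfolding fs_def by simp
lemma fs_delta: "fs (delta x)" unfolding fs_def delta_def by simp

lemma bim_l_add: "bimodule l r \<Longrightarrow> l (a + b) x = l a x + l b x" unfolding bimodule_def by blast
lemma bim_l_addx: "bimodule l r \<Longrightarrow> l a (x + y) = l a x + l a y" unfolding bimodule_def by simp
lemma bim_l_mult: "bimodule l r \<Longrightarrow> l (a * b) x = l a (l b x)" unfolding bimodule_def by blast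
lemma bim_l_one: "bimodule l r \<Longrightarrow> l 1 x = x" unfolding bimodule_def by blast
lemma bim_r_add: "bimodule l r \<Longrightarrow> r x (s + t) = r x s + r x t" unfolding bimodule_def by blast
lemma bim_r_addx: "bimodule l r \<Longrightarrow> r (x + y) s = r x s + r y s" unfolding bimodule_def by blast
lemma bim_r_mult: "bimodule l r \<Longrightarrow> r x (s * t) = r (r x s) t" unfolding bimodule_def by blast
lemma bim_lr: "bimodule l r \<Longrightarrow> l a (r x s) = r (l a x) s" unfolding bimodule_def by blast

lemma bim_l_zero: "bimodule l r \<Longrightarrow> l 0 x = 0"
  using bim_l_add[of l r 0 0 x] by simp
lemma bim_l_0: "bimodule l r \<Longrightarrow> l a 0 = 0"
  using bim_l_addx[of l r a 0 0] by simp
lemma bim_r_0: "bimodule l r \<Longrightarrow> r 0 s = 0"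
  using bim_r_addx[of l r 0 0 s] by simp
lemma bim_l_neg: "bimodule l r \<Longrightarrow> l (- a) x = - l a x"
  using bim_l_add[of l r "-a" a x] bim_l_zero[of l r x] by (simp add: eq_neg_iff_add_eq_0)
lemma bim_l_sum: "bimodule l r \<Longrightarrow> l a (\<Sum>i\<in>S. F i) = (\<Sum>i\<in>S. l a (F i))"
  by (induction S rule: infinite_finite_induct) (auto simp: bim_l_0 bim_l_addx)
lemma bim_r_sum: "bimodule l r \<Longrightarrow> r (\<Sum>i\<in>S. F i) s = (\<Sum>i\<in>S. r (F i) s)"
  by (induction S rule: infinite_finite_induct) (auto simp: bim_r_0 bim_r_addx)
lemma bim_l_sumr: "bimodule l r \<Longrightarrow> l (\<Sum>i\<in>S. F i) x = (\<Sum>i\<in>S. l (F i) x)"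
  by (induction S rule: infinite_finite_induct) (auto simp: bim_l_zero bim_l_add)

lemma bim_mult: "bimodule ((*) :: 'r::ring_1 \<Rightarrow> _) (*)"
  unfolding bimodule_def by (simp add: algebra_simps)

definition lin :: "('r::ring_1 \<Rightarrow> 'y::ab_group_add \<Rightarrow> 'y) \<Rightarrow> ('x \<Rightarrow> 'y) \<Rightarrow> ('x \<Rightarrow> int) \<Rightarrow> 'y" where
  "lin l G u = (\<Sum>x\<in>{x. u x \<noteq> 0}. l (of_int (u x)) (G x))"

lemma lin_superset:
  assumes "bimodule l r" "finite S" "{x. u x \<noteq> 0} \<subseteq> S"
  shows "lin l G u = (\<Sum>x\<in>S. l (of_int (u x)) (G x))"
  unfolding lin_def using assms
  by (intro sum.mono_neutral_left) (auto simp: bim_l_zero)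

lemma lin_add:
  assumes b: "bimodule l r" and "fs u" "fs v"
  shows "lin l G (u + v) = lin l G u + lin l G v"
proof -
  let ?S = "{x. u x \<noteq> 0} \<union> {x. v x \<noteq> 0}"
  have f: "finite ?S" using assms unfolding fs_def by simp
  have "lin l G (u + v) = (\<Sum>x\<in>?S. l (of_int ((u+v) x)) (G x))"
    by (rule lin_superset[OF b f]) auto
  also have "\<dots> = (\<Sum>x\<in>?S. l (of_int (u x)) (G x)) + (\<Sum>x\<in>?S. l (of_int (v x)) (G x))"
    by (simp add: bim_l_add[OF b] sum.distrib)
  also have "\<dots> = lin l G u + lin l G v"
    by (simp add: lin_superset[OF b f])
  finally show ?thesis .
qed

lemma lin_neg:
  assumes b: "bimodule l r"
  shows "lin l G (- u) = - lin l G u"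
  unfolding lin_def by (simp add: bim_l_neg[OF b] sum_negf)

lemma lin_diff:
  assumes b: "bimodule l r" and "fs u" "fs v"
  shows "lin l G (u - v) = lin l G u - lin l G v"
  using lin_add[OF b assms(2) fs_neg[OF assms(3)], of G] lin_neg[OF b, of G v] by simp

lemma lin_delta:
  assumes b: "bimodule l r"
  shows "lin l G (delta x) = G x"
proof -
  have "{y. delta x y \<noteq> 0} = {x}" unfolding delta_def by auto
  then show ?thesis unfolding lin_def by (simp add: delta_def bim_l_one[OF b])
qed

lemma lin_cong:
  "(\<And>x. u x \<noteq> 0 \<Longrightarrow> G x = G' x) \<Longrightarrow> lin l G u = lin l G' u"
  unfolding lin_def by (rule sum.cong) auto

lemma push_superset:
  assumes "finite S" "{x. u x \<noteq> 0} \<subseteq> S"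
  shows "push h u z = (\<Sum>x\<in>{x\<in>S. h x = z}. u x)"
  unfolding push_def using assms
  by (intro sum.mono_neutral_left) auto

lemma push_supp: "{z. push h u z \<noteq> 0} \<subseteq> h ` {x. u x \<noteq> 0}"
proof
  fix z assume z: "z \<in> {z. push h u z \<noteq> 0}"
  have "{x. u x \<noteq> 0 \<and> h x = z} \<noteq> {}"
  proof
    assume e: "{x. u x \<noteq> 0 \<and> h x = z} = {}"
    have "push h u z = 0" unfolding push_def e by simp
    then show False using z by simp
  qed
  then show "z \<in> h ` {x. u x \<noteq> 0}" by blast
qed

lemma fs_push: "fs u \<Longrightarrow> fs (push h u)"
  unfolding fs_def by (rule finite_subset[OF push_supp finite_imageI])

lemma push_add:
  assumes "fs u" "fs v"
  shows "push h (u + v) = push h u + push h v"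
proof
  fix z
  let ?S = "{x. u x \<noteq> 0} \<union> {x. v x \<noteq> 0}"
  have f: "finite ?S" using assms unfolding fs_def by simp
  have "push h (u + v) z = (\<Sum>x\<in>{x\<in>?S. h x = z}. (u+v) x)"
    by (rule push_superset[OF f]) auto
  also have "\<dots> = (\<Sum>x\<in>{x\<in>?S. h x = z}. u x) + (\<Sum>x\<in>{x\<in>?S. h x = z}. v x)"
    by (simp add: sum.distrib)
  also have "\<dots> = push h u z + push h v z"
    by (simp add: push_superset[OF f])
  finally show "push h (u + v) z = (push h u + push h v) z" by simp
qed

lemma push_neg: "push h (- u) = - push h u"
  unfolding push_def by (simp add: sum_negf fun_eq_iff)

lemma push_diff: "fs u \<Longrightarrow> fs v \<Longrightarrow> push h (u - v) = push h u - push h v"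
  using push_add[of u "-v" h] fs_neg[of v] push_neg[of h v] by simp

lemma push_delta: "push h (delta x) = delta (h x)"
proof
  fix z
  have "{y. delta x y \<noteq> 0 \<and> h y = z} = (if h x = z then {x} else {})" unfolding delta_def by auto
  then show "push h (delta x) z = delta (h x) z" unfolding push_def by (simp add: delta_def)
qed

lemma lin_push:
  assumes b: "bimodule l r" and u: "fs u"
  shows "lin l G (push h u) = (\<Sum>x\<in>{x. u x \<noteq> 0}. l (of_int (u x)) (G (h x)))"
proof -
  let ?S = "{x. u x \<noteq> 0}"
  have f: "finite ?S" using u unfolding fs_def .
  have "lin l G (push h u) = (\<Sum>z\<in>h ` ?S. l (of_int (push h u z)) (G z))"
    by (rule lin_superset[OF b]) (use f push_supp[of h u] in auto)
  also have "\<dots> = (\<Sum>z\<in>h ` ?S. (\<Sum>x\<in>{x\<in>?S. h x = z}. l (of_int (u x)) (G z)))"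
    by (intro sum.cong refl) (simp add: push_superset[OF f] bim_l_sumr[OF b])
  also have "\<dots> = (\<Sum>z\<in>h ` ?S. (\<Sum>x\<in>{x\<in>?S. h x = z}. l (of_int (u x)) (G (h x))))"
    by (intro sum.cong refl) auto
  also have "\<dots> = (\<Sum>x\<in>?S. l (of_int (u x)) (G (h x)))"
    by (rule sum.image_gen[OF f, symmetric])
  finally show ?thesis .
qed

lemma gen_fs: assumes "\<And>g. g \<in> G0 \<Longrightarrow> fs g" and "w \<in> gen_subgroup G0" shows "fs w"
  using assms(2)
  apply induction
     apply (rule fs_zero)
    apply (erule assms(1))
   apply (blast intro: fs_add)
  apply (blast intro: fs_neg)
  done

lemma gen_kill:
  assumes "\<And>g. g \<in> G0 \<Longrightarrow> fs g"
    and addF: "\<And>u v. fs u \<Longrightarrow> fs v \<Longrightarrow> F (u + v) = F u + F v"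
    and "\<And>g. g \<in> G0 \<Longrightarrow> F g = (0::'y::ab_group_add)"
    and "w \<in> gen_subgroup G0"
  shows "F w = 0"
  using assms(4)
proof (induction rule: gen_subgroup.induct)
  case zero
  have "F 0 = 0" using addF[OF fs_zero fs_zero] by simp
  then show ?case .
next
  case (gen g) then show ?case using assms(3) by simp
next
  case (add u v)
  have fu: "fs u" and fv: "fs v" using add.hyps gen_fs[OF assms(1)] by blast+
  show ?case using add.IH addF[OF fu fv] by (metis add_0_right)
next
  case (neg u)
  have "fs u" using neg gen_fs assms(1) by blast
  then have "F (- u + u) = F (- u) + F u" using addF fs_neg by blast
  moreover have "F 0 = 0" using addF[OF fs_zero fs_zero] by simp
  ultimately show ?case using neg.IH by (metis add.right_neutral left_minus)
qed

lemma gen_diff: "u \<in> gen_subgroup G0 \<Longrightarrow> v \<in> gen_subgroup G0 \<Longrightarrow> u - v \<in> gen_subgroup G0"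
  using gen_subgroup.add[OF _ gen_subgroup.neg, of u G0 v] by simp

lemma gen_map:
  assumes "\<And>g. g \<in> G0 \<Longrightarrow> fs g"
    and addP: "\<And>u v. fs u \<Longrightarrow> fs v \<Longrightarrow> P (u + v) = P u + P v"
    and negP: "\<And>u. P (- u) = - P u"
    and "\<And>g. g \<in> G0 \<Longrightarrow> P g \<in> gen_subgroup G1"
    and "w \<in> gen_subgroup G0"
  shows "P w \<in> gen_subgroup G1"
  using assms(5)
proof (induction rule: gen_subgroup.induct)
  case zero
  have "P 0 = 0" using addP[OF fs_zero fs_zero] by simp
  then show ?case by (metis gen_subgroup.zero)
next
  case (gen g) then show ?case using assms(4) by simp
next
  case (add u v)
  have fu: "fs u" and fv: "fs v" using add.hyps gen_fs[OF assms(1)] by blast+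
  show ?case unfolding addP[OF fu fv] by (rule gen_subgroup.add[OF add.IH])
next
  case (neg u) show ?case unfolding negP by (rule gen_subgroup.neg[OF neg.IH])
qed




context
  fixes lM :: "'b::ring_1 \<Rightarrow> 'm::ab_group_add \<Rightarrow> 'm" and rM :: "'m \<Rightarrow> 'a::ring_1 \<Rightarrow> 'm"
  assumes bim: "bimodule lM rM"
begin

abbreviation "HH \<equiv> gen_subgroup (tens_rels lM rM)"
abbreviation "qq \<equiv> tcls lM rM"

lemma dual_iff: "f \<in> dual lM \<longleftrightarrow> (\<forall>x y. f (x + y) = f x + f y) \<and> (\<forall>b x. f (lM b x) = b * f x)"
  unfolding dual_def lhom_def by simp

lemma dual_add: "f \<in> dual lM \<Longrightarrow> g \<in> dual lM \<Longrightarrow> f + g \<in> dual lM"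
  unfolding dual_iff by (simp add: algebra_simps)

lemma dual_lact: "f \<in> dual lM \<Longrightarrow> hom_lact rM a f \<in> dual lM"
  unfolding dual_iff hom_lact_def by (simp add: bim_r_addx[OF bim] bim_lr[OF bim, symmetric])

lemma dual_ract: "f \<in> dual lM \<Longrightarrow> hom_ract (*) f b \<in> dual lM"
  unfolding dual_iff hom_ract_def by (simp add: algebra_simps)

lemma freeT_iff: "u \<in> freeT lM \<longleftrightarrow> fs u \<and> (\<forall>x. u x \<noteq> 0 \<longrightarrow> snd x \<in> dual lM)"
  unfolding freeT_def fs_def by simp

lemma freeT_fs: "u \<in> freeT lM \<Longrightarrow> fs u" unfolding freeT_iff by simp

lemma freeT_add: "u \<in> freeT lM \<Longrightarrow> v \<in> freeT lM \<Longrightarrow> u + v \<in> freeT lM"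
proof -
  assume u: "u \<in> freeT lM" and v: "v \<in> freeT lM"
  have "fs (u + v)" using u v freeT_fs fs_add by blast
  moreover have "\<forall>x. (u + v) x \<noteq> 0 \<longrightarrow> snd x \<in> dual lM"
  proof (intro allI impI)
    fix x assume "(u + v) x \<noteq> 0"
    then have "u x \<noteq> 0 \<or> v x \<noteq> 0" by auto
    then show "snd x \<in> dual lM" using u v unfolding freeT_iff by blast
  qed
  ultimately show ?thesis unfolding freeT_iff by blast
qed

lemma freeT_neg: "u \<in> freeT lM \<Longrightarrow> - u \<in> freeT lM"
  unfolding freeT_iff using fs_neg by auto

lemma freeT_diff: "u \<in> freeT lM \<Longrightarrow> v \<in> freeT lM \<Longrightarrow> u - v \<in> freeT lM"
  using freeT_add[of u "- v"] freeT_neg[of v] by simp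

lemma freeT_zero: "0 \<in> freeT lM"
  unfolding freeT_iff using fs_zero by simp

lemma freeT_delta: "snd x \<in> dual lM \<Longrightarrow> delta x \<in> freeT lM"
  using fs_delta[of x] unfolding freeT_iff delta_def by auto

lemma rels_cases:
  assumes "g \<in> tens_rels lM rM"
  obtains m m' f where "f \<in> dual lM" "g = delta (m + m', f) - delta (m, f) - delta (m', f)"
  | m f f' where "f \<in> dual lM" "f' \<in> dual lM" "g = delta (m, f + f') - delta (m, f) - delta (m, f')"
  | m a f where "f \<in> dual lM" "g = delta (rM m a, f) - delta (m, hom_lact rM a f)"
  using assms unfolding tens_rels_def by blast

lemma rels_freeT: "g \<in> tens_rels lM rM \<Longrightarrow> g \<in> freeT lM"
  by (erule rels_cases) (auto intro!: freeT_diff freeT_delta dual_add dual_lact)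

lemma rels_fs: "g \<in> tens_rels lM rM \<Longrightarrow> fs g"
  using rels_freeT freeT_fs by blast

lemma H_freeT: assumes "w \<in> HH" shows "w \<in> freeT lM"
  using assms
  apply induction
     apply (rule freeT_zero)
    apply (erule rels_freeT)
   apply (blast intro: freeT_add)
  apply (blast intro: freeT_neg)
  done

lemma H_fs: "w \<in> HH \<Longrightarrow> fs w" using H_freeT freeT_fs by blast

lemma H_diff: "u \<in> HH \<Longrightarrow> v \<in> HH \<Longrightarrow> u - v \<in> HH" by (rule gen_diff)

lemma H_add: "u \<in> HH \<Longrightarrow> v \<in> HH \<Longrightarrow> u + v \<in> HH" by (rule gen_subgroup.add)

lemma H_neg: "u \<in> HH \<Longrightarrow> - u \<in> HH" by (rule gen_subgroup.neg)

lemma H_swap: "u - v \<in> HH \<Longrightarrow> v - u \<in> HH"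
  using H_neg[of "u - v"] by simp

lemma H_trans: "u - v \<in> HH \<Longrightarrow> v - w \<in> HH \<Longrightarrow> u - w \<in> HH"
  using H_add[of "u - v" "v - w"] by simp

lemma tcls_self: "u \<in> freeT lM \<Longrightarrow> u \<in> qq u"
  unfolding tcls_def by (simp add: gen_subgroup.zero)

lemma tcls_eq: assumes "v \<in> freeT lM" "u - v \<in> HH" shows "qq u = qq v"
proof
  show "qq u \<subseteq> qq v" unfolding tcls_def using H_trans[OF H_swap[OF assms(2)]] by blast
  show "qq v \<subseteq> qq u" unfolding tcls_def using H_trans[OF assms(2)] by blast
qed

lemma tcls_eqD: assumes "v \<in> freeT lM" "qq u = qq v" shows "u - v \<in> HH"
  using tcls_self[OF assms(1)] assms(2) unfolding tcls_def by blast

lemma tcls_tensor: "u \<in> freeT lM \<Longrightarrow> qq u \<in> tensor lM rM"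
  unfolding tensor_def by blast

lemma trep_tcls: assumes "u \<in> freeT lM" shows "trep (qq u) \<in> freeT lM" "u - trep (qq u) \<in> HH"
proof -
  have "trep (qq u) \<in> qq u" unfolding trep_def by (rule someI[where x=u]) (rule tcls_self[OF assms])
  then show "trep (qq u) \<in> freeT lM" "u - trep (qq u) \<in> HH" unfolding tcls_def by blast+
qed

lemma tensor_trep: assumes "X \<in> tensor lM rM"
  shows "trep X \<in> freeT lM" "qq (trep X) = X"
proof -
  obtain u where u: "u \<in> freeT lM" "X = qq u" using assms unfolding tensor_def by blast
  show "trep X \<in> freeT lM" using trep_tcls(1)[OF u(1)] u(2) by simp
  show "qq (trep X) = X" using tcls_eq[OF trep_tcls(1)[OF u(1)] trep_tcls(2)[OF u(1)]] u(2) by simp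
qed

lemma trep_tcls_eq: "u \<in> freeT lM \<Longrightarrow> qq (trep (qq u)) = qq u"
  using tensor_trep(2)[OF tcls_tensor] by blast

lemma tadd_tcls: assumes "u \<in> freeT lM" "v \<in> freeT lM"
  shows "tadd lM rM (qq u) (qq v) = qq (u + v)"
proof -
  have "(u + v) - (trep (qq u) + trep (qq v)) \<in> HH"
    using H_add[OF trep_tcls(2)[OF assms(1)] trep_tcls(2)[OF assms(2)]] by (simp add: algebra_simps)
  then show ?thesis unfolding tadd_def
    by (intro tcls_eq[symmetric] freeT_add trep_tcls(1) assms)
qed

lemma push_H:
  assumes "\<And>g. g \<in> tens_rels lM rM \<Longrightarrow> push h g \<in> HH" and "w \<in> HH"
  shows "push h w \<in> HH"
  by (rule gen_map[OF rels_fs push_add push_neg assms(1) assms(2)])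

lemma push_rel: "push h (delta a - delta b - delta c) = delta (h a) - delta (h b) - delta (h c)"
  by (simp add: push_diff fs_diff fs_delta push_delta)

lemma rel1: "f \<in> dual lM \<Longrightarrow> delta (m + m', f) - delta (m, f) - delta (m', f) \<in> HH"
  by (rule gen_subgroup.gen) (unfold tens_rels_def, blast)
lemma rel2: "f \<in> dual lM \<Longrightarrow> f' \<in> dual lM \<Longrightarrow> delta (m, f + f') - delta (m, f) - delta (m, f') \<in> HH"
  by (rule gen_subgroup.gen) (unfold tens_rels_def, blast)
lemma rel3: "f \<in> dual lM \<Longrightarrow> delta (rM m a, f) - delta (m, hom_lact rM a f) \<in> HH"
  by (rule gen_subgroup.gen) (unfold tens_rels_def, blast)

lemma push_rel3: "push h (delta a - delta b) = delta (h a) - delta (h b)"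
  by (simp add: push_diff fs_delta push_delta)

lemma rels_push_L: "g \<in> tens_rels lM rM \<Longrightarrow> push (\<lambda>(m, f). (lM b m, f)) g \<in> HH"
proof (erule rels_cases)
  fix m m' f assume f: "f \<in> dual lM" and g: "g = delta (m + m', f) - delta (m, f) - delta (m', f)"
  show ?thesis unfolding g push_rel using rel1[OF f, of "lM b m" "lM b m'"] by (simp add: bim_l_addx[OF bim])
next
  fix m f f' assume f: "f \<in> dual lM" "f' \<in> dual lM" and g: "g = delta (m, f + f') - delta (m, f) - delta (m, f')"
  show ?thesis unfolding g push_rel using rel2[OF f, of "lM b m"] by simp
next
  fix m a f assume f: "f \<in> dual lM" and g: "g = delta (rM m a, f) - delta (m, hom_lact rM a f)"
  show ?thesis unfolding g push_rel3 using rel3[OF f, of "lM b m" a] by (simp add: bim_lr[OF bim])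
qed

lemma ract_add: "hom_ract (*) (f + (f' :: 'm \<Rightarrow> 'b)) b = hom_ract (*) f b + hom_ract (*) f' b"
  unfolding hom_ract_def by (rule ext) (simp add: distrib_right)

lemma ract_lact: "hom_ract (*) (hom_lact rM a (f :: 'm \<Rightarrow> 'b)) b = hom_lact rM a (hom_ract (*) f b)"
  unfolding hom_ract_def hom_lact_def by simp

lemma rels_push_R: "g \<in> tens_rels lM rM \<Longrightarrow> push (\<lambda>(m, f). (m, hom_ract (*) f b)) g \<in> HH"
proof (erule rels_cases)
  fix m m' f assume f: "f \<in> dual lM" and g: "g = delta (m + m', f) - delta (m, f) - delta (m', f)"
  show ?thesis unfolding g push_rel using rel1[OF dual_ract[OF f, of b], of m m'] by simp
next
  fix m f f' assume f: "f \<in> dual lM" "f' \<in> dual lM" and g: "g = delta (m, f + f') - delta (m, f) - delta (m, f')"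
  show ?thesis unfolding g push_rel using rel2[OF dual_ract[OF f(1), of b] dual_ract[OF f(2), of b], of m] by (simp add: ract_add)
next
  fix m a f assume f: "f \<in> dual lM" and g: "g = delta (rM m a, f) - delta (m, hom_lact rM a f)"
  show ?thesis unfolding g push_rel3 using rel3[OF dual_ract[OF f, of b], of m a] by (simp add: ract_lact)
qed

lemma freeT_push_L: assumes "u \<in> freeT lM" shows "push (\<lambda>(m, f). (lM b m, f)) u \<in> freeT lM"
proof -
  have "fs (push (\<lambda>(m, f). (lM b m, f)) u)" using assms freeT_fs fs_push by blast
  moreover have "snd z \<in> dual lM" if nz: "push (\<lambda>(m, f). (lM b m, f)) u z \<noteq> 0" for z
  proof -
    obtain x where "u x \<noteq> 0" "z = (\<lambda>(m, f). (lM b m, f)) x" using push_supp[of "\<lambda>(m, f). (lM b m, f)" u] nz by blast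
    then show ?thesis using assms unfolding freeT_iff by (auto split: prod.splits)
  qed
  ultimately show ?thesis unfolding freeT_iff by blast
qed

lemma freeT_push_R: assumes "u \<in> freeT lM" shows "push (\<lambda>(m, f). (m, hom_ract (*) f b)) u \<in> freeT lM"
proof -
  have "fs (push (\<lambda>(m, f). (m, hom_ract (*) f b)) u)" using assms freeT_fs fs_push by blast
  moreover have "snd z \<in> dual lM" if nz: "push (\<lambda>(m, f). (m, hom_ract (*) f b)) u z \<noteq> 0" for z
  proof -
    obtain x where "u x \<noteq> 0" "z = (\<lambda>(m, f). (m, hom_ract (*) f b)) x" using push_supp[of "\<lambda>(m, f). (m, hom_ract (*) f b)" u] nz by blast
    then show ?thesis using assms dual_ract unfolding freeT_iff by (auto split: prod.splits)
  qed
  ultimately show ?thesis unfolding freeT_iff by blast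
qed

lemma push_cls:
  assumes rel: "\<And>g. g \<in> tens_rels lM rM \<Longrightarrow> push h g \<in> HH"
    and pf: "push h u \<in> freeT lM" and u: "u \<in> freeT lM"
  shows "qq (push h (trep (qq u))) = qq (push h u)"
proof -
  have "push h (trep (qq u)) - push h u = push h (trep (qq u) - u)"
    using push_diff[OF freeT_fs[OF trep_tcls(1)[OF u]] freeT_fs[OF u], of h] by simp
  moreover have "push h (trep (qq u) - u) \<in> HH"
    by (rule push_H[OF rel H_swap[OF trep_tcls(2)[OF u]]])
  ultimately show ?thesis using tcls_eq[OF pf] by simp
qed

lemma tlact_tcls: "u \<in> freeT lM \<Longrightarrow> tlact lM rM b (qq u) = qq (push (\<lambda>(m, f). (lM b m, f)) u)"
  unfolding tlact_def by (rule push_cls[OF rels_push_L freeT_push_L])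

lemma tract_tcls: "u \<in> freeT lM \<Longrightarrow> tract lM rM (qq u) b = qq (push (\<lambda>(m, f). (m, hom_ract (*) f b)) u)"
  unfolding tract_def by (rule push_cls[OF rels_push_R freeT_push_R])

lemma evF_lin: "evF u = lin (*) (\<lambda>x. snd x (fst x)) u"
  unfolding evF_def lin_def by simp

lemma evF_add: "fs u \<Longrightarrow> fs v \<Longrightarrow> evF (u + v) = evF u + evF v"
  unfolding evF_lin by (rule lin_add[OF bim_mult])

lemma evF_diff: "fs u \<Longrightarrow> fs v \<Longrightarrow> evF (u - v) = evF u - evF v"
  unfolding evF_lin by (rule lin_diff[OF bim_mult])

lemma evF_rels: "g \<in> tens_rels lM rM \<Longrightarrow> evF g = 0"
proof (erule rels_cases)
  fix m m' f assume "f \<in> dual lM" "g = delta (m + m', f) - delta (m, f) - delta (m', f)"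
  then show ?thesis unfolding evF_lin
    by (simp add: lin_diff[OF bim_mult] fs_diff fs_delta lin_delta[OF bim_mult] dual_iff)
next
  fix m f f' assume "f \<in> dual lM" "f' \<in> dual lM" "g = delta (m, f + f') - delta (m, f) - delta (m, f')"
  then show ?thesis unfolding evF_lin
    by (simp add: lin_diff[OF bim_mult] fs_diff fs_delta lin_delta[OF bim_mult])
next
  fix m a f assume "f \<in> dual lM" "g = delta (rM m a, f) - delta (m, hom_lact rM a f)"
  then show ?thesis unfolding evF_lin
    by (simp add: lin_diff[OF bim_mult] fs_diff fs_delta lin_delta[OF bim_mult] hom_lact_def)
qed

lemma evF_H: "w \<in> HH \<Longrightarrow> evF w = 0"
  by (rule gen_kill[OF rels_fs evF_add evF_rels])

lemma ev_tcls: assumes "u \<in> freeT lM" shows "ev (qq u) = evF u"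
proof -
  have "evF u - evF (trep (qq u)) = 0"
    using evF_H[OF trep_tcls(2)[OF assms]] evF_diff[OF freeT_fs[OF assms] freeT_fs[OF trep_tcls(1)[OF assms]]] by simp
  then show ?thesis unfolding ev_def by simp
qed

lemma evF_push_L: assumes "u \<in> freeT lM" shows "evF (push (\<lambda>(m, f). (lM b m, f)) u) = b * evF u"
proof -
  have "evF (push (\<lambda>(m, f). (lM b m, f)) u) = (\<Sum>x\<in>{x. u x \<noteq> 0}. of_int (u x) * snd x (lM b (fst x)))"
    unfolding evF_lin by (simp add: lin_push[OF bim_mult freeT_fs[OF assms]] case_prod_beta)
  also have "\<dots> = (\<Sum>x\<in>{x. u x \<noteq> 0}. b * (of_int (u x) * snd x (fst x)))"
  proof (intro sum.cong refl)
    fix x assume "x \<in> {x. u x \<noteq> 0}"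
    then have "snd x \<in> dual lM" using assms unfolding freeT_iff by blast
    then show "of_int (u x) * snd x (lM b (fst x)) = b * (of_int (u x) * snd x (fst x))"
      unfolding dual_iff by (metis mult.assoc mult_of_int_commute)
  qed
  also have "\<dots> = b * evF u" unfolding evF_def by (simp add: sum_distrib_left)
  finally show ?thesis .
qed

lemma evF_push_R: assumes "u \<in> freeT lM" shows "evF (push (\<lambda>(m, f). (m, hom_ract (*) f b)) u) = evF u * b"
proof -
  have "evF (push (\<lambda>(m, f). (m, hom_ract (*) f b)) u) = (\<Sum>x\<in>{x. u x \<noteq> 0}. of_int (u x) * (snd x (fst x) * b))"
    unfolding evF_lin by (simp add: lin_push[OF bim_mult freeT_fs[OF assms]] case_prod_beta hom_ract_def)
  also have "\<dots> = evF u * b" unfolding evF_def by (simp add: sum_distrib_right mult.assoc)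
  finally show ?thesis .
qed

end



lemma add_sum:
  fixes f :: "'x::comm_monoid_add \<Rightarrow> 'y::ab_group_add"
  assumes "\<And>x y. f (x + y) = f x + f y"
  shows "f (\<Sum>i\<in>S. F i) = (\<Sum>i\<in>S. f (F i))"
proof -
  have f0: "f 0 = 0" using assms[of 0 0] by simp
  show ?thesis by (induction S rule: infinite_finite_induct) (auto simp: f0 assms)
qed

context
  fixes lM :: "'b::ring_1 \<Rightarrow> 'm::ab_group_add \<Rightarrow> 'm" and rM :: "'m \<Rightarrow> 'a::ring_1 \<Rightarrow> 'm"
  assumes bim: "bimodule lM rM"
begin

abbreviation "cl \<equiv> tcls lM rM"
abbreviation "HQ \<equiv> gen_subgroup (tens_rels lM rM)"

lemma ker_iff: "X \<in> ker_ev lM rM \<longleftrightarrow> X \<in> tensor lM rM \<and> ev X = 0"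
  unfolding ker_ev_def by simp

lemma case_inj:
  fixes lY :: "'b \<Rightarrow> 'y::ab_group_add \<Rightarrow> 'y" and lZ :: "'b \<Rightarrow> 'z::ab_group_add \<Rightarrow> 'z"
  assumes inj: "inj_on ev (tensor lM rM)"
    and bY: "bimodule lY rY" and E: "E_class lM rM lY rY lZ rZ f"
    and phi: "bihom (ker_ev lM rM) UNIV (tadd lM rM) (+) (tlact lM rM) lZ (tract lM rM) rZ \<phi>"
  shows "\<exists>\<psi>. bihom (ker_ev lM rM) UNIV (tadd lM rM) (+) (tlact lM rM) lY (tract lM rM) rY \<psi>
                 \<and> (\<forall>X\<in>ker_ev lM rM. f (\<psi> X) = \<phi> X)"
proof (intro exI conjI ballI)
  show "bihom (ker_ev lM rM) UNIV (tadd lM rM) (+) (tlact lM rM) lY (tract lM rM) rY (\<lambda>_. 0)"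
    unfolding bihom_def by (simp add: bim_l_0[OF bY] bim_r_0[OF bY])
  have fadd: "f (x + y) = f x + f y" for x y using E unfolding E_class_def bihom_def by blast
  have f0: "f 0 = 0" using fadd[of 0 0] by simp
  fix X assume X: "X \<in> ker_ev lM rM"
  define u where "u = trep X"
  have Xt: "X \<in> tensor lM rM" and evX: "ev X = 0" using X ker_iff by auto
  have u: "u \<in> freeT lM" "cl u = X" using tensor_trep[OF bim Xt] u_def by auto
  have evu: "evF u = 0" using ev_tcls[OF bim u(1)] u(2) evX by simp
  have tXX: "tadd lM rM X X = cl (u + u)" using tadd_tcls[OF bim u(1) u(1)] u(2) by simp
  have uu: "u + u \<in> freeT lM" using freeT_add[OF bim u(1) u(1)] .
  have "ev (cl (u + u)) = 0" using ev_tcls[OF bim uu] evF_add[OF bim freeT_fs[OF bim u(1)] freeT_fs[OF bim u(1)]] evu by simp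
  then have "cl (u + u) = X" using inj_onD[OF inj, of "cl (u + u)" X] tcls_tensor[OF bim uu] Xt evX by simp
  then have "tadd lM rM X X = X" using tXX by simp
  moreover have "\<phi> (tadd lM rM X X) = \<phi> X + \<phi> X" using phi X unfolding bihom_def by blast
  ultimately have "\<phi> X = 0" by simp
  then show "f 0 = \<phi> X" using f0 by simp
qed


lemma lhomD:
  assumes "h \<in> lhom l1 l2"
  shows "h (x + y) = h x + h y" "h (l1 b x) = l2 b (h x)"
  using assms unfolding lhom_def by auto

lemma freeT_sd: "snd x \<in> dual lM \<Longrightarrow> (\<lambda>y. if y = x then k else 0) \<in> freeT lM"
  unfolding freeT_iff[OF bim] fs_def by (auto intro: finite_subset[of _ "{x}"])

lemma additive_lin:
  fixes lZ :: "'b \<Rightarrow> 'z::ab_group_add \<Rightarrow> 'z"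
  assumes bZ: "bimodule lZ rZ"
    and addF: "\<And>u v. u \<in> freeT lM \<Longrightarrow> v \<in> freeT lM \<Longrightarrow> F (u + v) = F u + F v"
    and u: "u \<in> freeT lM"
  shows "F u = lin lZ (\<lambda>x. F (delta x)) u"
proof -
  have F0: "F 0 = 0" using addF[OF freeT_zero[OF bim] freeT_zero[OF bim]] by simp
  have Fneg: "F (- v) = - F v" if "v \<in> freeT lM" for v
  proof -
    have "F (- v + v) = F (- v) + F v" using addF[OF freeT_neg[OF bim that] that] .
    then show ?thesis using F0 by (simp add: eq_neg_iff_add_eq_0)
  qed
  define sd where "sd k x = (\<lambda>y. if y = x then k else (0::int))" for k :: int and x :: "'m \<times> ('m \<Rightarrow> 'b)"
  have sdF: "sd k x \<in> freeT lM" if "snd x \<in> dual lM" for k x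
    unfolding sd_def by (rule freeT_sd[OF that])
  have sd_nat: "F (sd (int n) x) = lZ (of_int (int n)) (F (delta x))" if x: "snd x \<in> dual lM" for n x
  proof (induction n)
    case 0
    have "sd (int 0) x = 0" unfolding sd_def by (simp add: fun_eq_iff)
    then show ?case using F0 bim_l_zero[OF bZ] by (metis of_int_0 of_nat_0)
  next
    case (Suc n)
    have e: "sd (int (Suc n)) x = sd (int n) x + delta x" unfolding sd_def delta_def by (simp add: fun_eq_iff)
    have "F (sd (int (Suc n)) x) = F (sd (int n) x) + F (delta x)"
      unfolding e by (rule addF[OF sdF[OF x] freeT_delta[OF bim x]])
    also have "\<dots> = lZ (of_int (int n)) (F (delta x)) + lZ 1 (F (delta x))"
      using Suc bim_l_one[OF bZ] by simp
    also have "\<dots> = lZ (of_int (int (Suc n))) (F (delta x))"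
      using bim_l_add[OF bZ, of "of_int (int n)" 1 "F (delta x)"] by (simp add: add.commute)
    finally show ?case .
  qed
  have sd_int: "F (sd k x) = lZ (of_int k) (F (delta x))" if x: "snd x \<in> dual lM" for k x
  proof (cases "k \<ge> 0")
    case True
    then show ?thesis using sd_nat[OF x, of "nat k"] by simp
  next
    case False
    have e: "sd k x = - sd (int (nat (- k))) x" unfolding sd_def using False by (simp add: fun_eq_iff)
    have "F (sd k x) = - lZ (of_int (int (nat (- k)))) (F (delta x))"
      unfolding e Fneg[OF sdF[OF x]] sd_nat[OF x] ..
    also have "\<dots> = lZ (of_int k) (F (delta x))"
      using False bim_l_neg[OF bZ, of "of_int (- k)" "F (delta x)"] by simp
    finally show ?thesis .
  qed
  have lin_sd: "lin lZ G (sd k x) = lZ (of_int k) (G x)" for G k x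
  proof (cases "k = 0")
    case True
    then show ?thesis unfolding lin_def sd_def by (simp add: bim_l_zero[OF bZ])
  next
    case False
    then have "{y. sd k x y \<noteq> 0} = {x}" unfolding sd_def by auto
    then show ?thesis unfolding lin_def by (simp add: sd_def)
  qed
  have main: "\<forall>v. v \<in> freeT lM \<longrightarrow> {y. v y \<noteq> 0} \<subseteq> S \<longrightarrow> F v = lin lZ (\<lambda>x. F (delta x)) v"
    if "finite S" for S
    using that
  proof (induction S rule: finite_induct)
    case empty
    show ?case
    proof (intro allI impI)
      fix v assume "v \<in> freeT lM" "{y. v y \<noteq> 0} \<subseteq> {}"
      then have "v = 0" by (auto simp: fun_eq_iff)
      then show "F v = lin lZ (\<lambda>x. F (delta x)) v" using F0 unfolding lin_def by simp
    qed
  next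
    case (insert x S)
    show ?case
    proof (intro allI impI)
      fix v assume v: "v \<in> freeT lM" and sv: "{y. v y \<noteq> 0} \<subseteq> insert x S"
      show "F v = lin lZ (\<lambda>x. F (delta x)) v"
      proof (cases "v x = 0")
        case True
        then have "{y. v y \<noteq> 0} \<subseteq> S" using sv by auto
        then show ?thesis using insert.IH v by blast
      next
        case False
        then have x: "snd x \<in> dual lM" using v unfolding freeT_iff[OF bim] by blast
        define v' where "v' = v - sd (v x) x"
        have v'F: "v' \<in> freeT lM" unfolding v'_def by (rule freeT_diff[OF bim v sdF[OF x]])
        have "{y. v' y \<noteq> 0} \<subseteq> S" using sv unfolding v'_def sd_def by auto
        then have IH: "F v' = lin lZ (\<lambda>x. F (delta x)) v'" using insert.IH v'F by blast
        have ve: "v = v' + sd (v x) x" unfolding v'_def by simp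
        have "F v = F (v' + sd (v x) x)" using ve by (rule arg_cong)
        also have "\<dots> = F v' + F (sd (v x) x)" by (rule addF[OF v'F sdF[OF x]])
        also have "\<dots> = lin lZ (\<lambda>x. F (delta x)) v' + lin lZ (\<lambda>x. F (delta x)) (sd (v x) x)"
          using IH sd_int[OF x] lin_sd by simp
        also have "\<dots> = lin lZ (\<lambda>x. F (delta x)) (v' + sd (v x) x)"
          by (rule lin_add[OF bZ freeT_fs[OF bim v'F] freeT_fs[OF bim sdF[OF x]], symmetric])
        also have "\<dots> = lin lZ (\<lambda>x. F (delta x)) v" using ve[symmetric] by (rule arg_cong)
        finally show ?thesis .
      qed
    qed
  qed
  show ?thesis using main[of "{y. u y \<noteq> 0}"] u freeT_fs[OF bim u] unfolding fs_def by blast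
qed


lemma case_sep:
  fixes lY :: "'b \<Rightarrow> 'y::ab_group_add \<Rightarrow> 'y" and lZ :: "'b \<Rightarrow> 'z::ab_group_add \<Rightarrow> 'z"
  assumes sep: "separable_bimod lM rM"
    and bY: "bimodule lY rY" and bZ: "bimodule lZ rZ" and E: "E_class lM rM lY rY lZ rZ f"
    and phi: "bihom (ker_ev lM rM) UNIV (tadd lM rM) (+) (tlact lM rM) lZ (tract lM rM) rZ \<phi>"
  shows "\<exists>\<psi>. bihom (ker_ev lM rM) UNIV (tadd lM rM) (+) (tlact lM rM) lY (tract lM rM) rY \<psi>
                 \<and> (\<forall>X\<in>ker_ev lM rM. f (\<psi> X) = \<phi> X)"
proof -
  obtain s where sH: "bihom UNIV (tensor lM rM) (+) (tadd lM rM) (*) (tlact lM rM) (*) (tract lM rM) s"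
    and sev: "\<And>b. ev (s b) = b"
    using sep unfolding separable_bimod_def by blast
  have s_t: "s e \<in> tensor lM rM" for e using sH unfolding bihom_def by blast
  have s_add: "s (e1 + e2) = tadd lM rM (s e1) (s e2)" for e1 e2 using sH unfolding bihom_def by blast
  have s_L: "s (b * e) = tlact lM rM b (s e)" for b e using sH unfolding bihom_def by blast
  have s_R: "s (e * b) = tract lM rM (s e) b" for b e using sH unfolding bihom_def by blast
  obtain g where gH: "bihom (lhom lM lZ) (lhom lM lY) (+) (+) (hom_lact rM) (hom_lact rM)
               (hom_ract rZ) (hom_ract rY) g" and gf: "\<And>h. h \<in> lhom lM lZ \<Longrightarrow> f \<circ> g h = h"
    using E unfolding E_class_def by blast
  have fH: "bihom UNIV UNIV (+) (+) lY lZ rY rZ f" using E unfolding E_class_def by blast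
  have g_lhom: "g h \<in> lhom lM lY" if "h \<in> lhom lM lZ" for h using gH that unfolding bihom_def by blast
  have g_add: "g (h + h') = g h + g h'" if "h \<in> lhom lM lZ" "h' \<in> lhom lM lZ" for h h'
    using gH that unfolding bihom_def by blast
  have g_lact: "g (hom_lact rM a h) = hom_lact rM a (g h)" if "h \<in> lhom lM lZ" for h a
    using gH that unfolding bihom_def by blast
  have g_ract: "g (hom_ract rZ h b) = hom_ract rY (g h) b" if "h \<in> lhom lM lZ" for h b
    using gH that unfolding bihom_def by blast
  have f_add: "f (x + y) = f x + f y" for x y using fH unfolding bihom_def by blast
  have f_L: "f (lY b y) = lZ b (f y)" for b y using fH unfolding bihom_def by blast
  have gfx: "f (g h m) = h m" if "h \<in> lhom lM lZ" for h m using gf[OF that] by (metis comp_apply)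
  have phi_add: "\<phi> (tadd lM rM X Y) = \<phi> X + \<phi> Y" if "X \<in> ker_ev lM rM" "Y \<in> ker_ev lM rM" for X Y
    using phi that unfolding bihom_def by blast
  have phi_L: "\<phi> (tlact lM rM b X) = lZ b (\<phi> X)" if "X \<in> ker_ev lM rM" for b X
    using phi that unfolding bihom_def by blast
  have phi_R: "\<phi> (tract lM rM X b) = rZ (\<phi> X) b" if "X \<in> ker_ev lM rM" for b X
    using phi that unfolding bihom_def by blast

  define t where "t e = trep (s e)" for e
  have tF: "t e \<in> freeT lM" for e unfolding t_def by (rule tensor_trep(1)[OF bim s_t])
  have t_cl: "cl (t e) = s e" for e unfolding t_def by (rule tensor_trep(2)[OF bim s_t])
  have t_ev: "evF (t e) = e" for e using sev[of e] unfolding ev_def t_def by simp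
  have t_add: "t (e1 + e2) - (t e1 + t e2) \<in> HQ" for e1 e2
  proof -
    have "cl (t (e1 + e2)) = cl (t e1 + t e2)"
      unfolding t_cl s_add by (subst t_cl[symmetric])+ (rule tadd_tcls[OF bim tF tF])
    then show ?thesis by (rule tcls_eqD[OF bim freeT_add[OF bim tF tF]])
  qed
  have t_L: "t (b * e) - push (\<lambda>(m, f). (lM b m, f)) (t e) \<in> HQ" for b e
  proof -
    have "cl (t (b * e)) = cl (push (\<lambda>(m, f). (lM b m, f)) (t e))"
      unfolding t_cl s_L by (subst t_cl[symmetric]) (rule tlact_tcls[OF bim tF])
    then show ?thesis by (rule tcls_eqD[OF bim freeT_push_L[OF bim tF]])
  qed
  have t_R: "t (e * b) - push (\<lambda>(m, f). (m, hom_ract (*) f b)) (t e) \<in> HQ" for b e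
  proof -
    have "cl (t (e * b)) = cl (push (\<lambda>(m, f). (m, hom_ract (*) f b)) (t e))"
      unfolding t_cl s_R by (subst t_cl[symmetric]) (rule tract_tcls[OF bim tF])
    then show ?thesis by (rule tcls_eqD[OF bim freeT_push_R[OF bim tF]])
  qed
  have t0: "t 0 \<in> HQ"
  proof -
    have e: "t (0 + 0) - (t 0 + t 0) = - t 0" by simp
    have "- (- t 0) \<in> HQ" using t_add[of 0 0] unfolding e by (rule H_neg[OF bim])
    then show ?thesis by simp
  qed

  define pr where "pr u = u - t (evF u)" for u
  have prF: "pr u \<in> freeT lM" if "u \<in> freeT lM" for u unfolding pr_def by (rule freeT_diff[OF bim that tF])
  have pr_ker: "cl (pr u) \<in> ker_ev lM rM" if u: "u \<in> freeT lM" for u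
  proof -
    have "evF (pr u) = 0" unfolding pr_def using evF_diff[OF bim freeT_fs[OF bim u] freeT_fs[OF bim tF]] t_ev by simp
    then show ?thesis unfolding ker_iff using tcls_tensor[OF bim prF[OF u]] ev_tcls[OF bim prF[OF u]] by simp
  qed
  define Phi where "Phi u = \<phi> (cl (pr u))" for u
  have Phi_cong: "Phi u = Phi v" if u: "u \<in> freeT lM" and v: "v \<in> freeT lM" and uv: "u - v \<in> HQ" for u v
  proof -
    have "evF u - evF v = 0" using evF_H[OF bim uv] evF_diff[OF bim freeT_fs[OF bim u] freeT_fs[OF bim v]] by simp
    then have "evF u = evF v" by simp
    then have "pr u - pr v = u - v" unfolding pr_def by simp
    then have "cl (pr u) = cl (pr v)" using tcls_eq[OF bim prF[OF v]] uv by simp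
    then show ?thesis unfolding Phi_def by simp
  qed
  have Phi_add: "Phi (u + v) = Phi u + Phi v" if u: "u \<in> freeT lM" and v: "v \<in> freeT lM" for u v
  proof -
    have "pr (u + v) - (pr u + pr v) = - (t (evF u + evF v) - (t (evF u) + t (evF v)))"
      unfolding pr_def evF_add[OF bim freeT_fs[OF bim u] freeT_fs[OF bim v]] by (simp add: algebra_simps)
    then have "pr (u + v) - (pr u + pr v) \<in> HQ" using H_neg[OF bim t_add] by simp
    then have "cl (pr (u + v)) = cl (pr u + pr v)"
      by (rule tcls_eq[OF bim freeT_add[OF bim prF[OF u] prF[OF v]]])
    also have "\<dots> = tadd lM rM (cl (pr u)) (cl (pr v))" by (rule tadd_tcls[OF bim prF[OF u] prF[OF v], symmetric])
    finally show ?thesis unfolding Phi_def using phi_add[OF pr_ker[OF u] pr_ker[OF v]] by simp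
  qed
  have Phi_L: "Phi (push (\<lambda>(m, f). (lM b m, f)) u) = lZ b (Phi u)" if u: "u \<in> freeT lM" for u b
  proof -
    let ?p = "push (\<lambda>(m, f). (lM b m, f))"
    have pu: "?p u \<in> freeT lM" by (rule freeT_push_L[OF bim u])
    have "pr (?p u) - ?p (pr u) = - (t (b * evF u) - ?p (t (evF u)))"
      unfolding pr_def evF_push_L[OF bim u] push_diff[OF freeT_fs[OF bim u] freeT_fs[OF bim tF]] by simp
    then have "pr (?p u) - ?p (pr u) \<in> HQ" using H_neg[OF bim t_L] by simp
    then have "cl (pr (?p u)) = cl (?p (pr u))"
      by (rule tcls_eq[OF bim freeT_push_L[OF bim prF[OF u]]])
    also have "\<dots> = tlact lM rM b (cl (pr u))" by (rule tlact_tcls[OF bim prF[OF u], symmetric])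
    finally show ?thesis unfolding Phi_def using phi_L[OF pr_ker[OF u]] by simp
  qed
  have Phi_R: "Phi (push (\<lambda>(m, f). (m, hom_ract (*) f b)) u) = rZ (Phi u) b" if u: "u \<in> freeT lM" for u b
  proof -
    let ?p = "push (\<lambda>(m, f). (m, hom_ract (*) f b))"
    have pu: "?p u \<in> freeT lM" by (rule freeT_push_R[OF bim u])
    have "pr (?p u) - ?p (pr u) = - (t (evF u * b) - ?p (t (evF u)))"
      unfolding pr_def evF_push_R[OF bim u] push_diff[OF freeT_fs[OF bim u] freeT_fs[OF bim tF]] by simp
    then have "pr (?p u) - ?p (pr u) \<in> HQ" using H_neg[OF bim t_R] by simp
    then have "cl (pr (?p u)) = cl (?p (pr u))"
      by (rule tcls_eq[OF bim freeT_push_R[OF bim prF[OF u]]])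
    also have "\<dots> = tract lM rM (cl (pr u)) b" by (rule tract_tcls[OF bim prF[OF u], symmetric])
    finally show ?thesis unfolding Phi_def using phi_R[OF pr_ker[OF u]] by simp
  qed
  have Phi_ker: "Phi (trep X) = \<phi> X" if X: "X \<in> ker_ev lM rM" for X
  proof -
    have Xt: "X \<in> tensor lM rM" and evX: "ev X = 0" using X ker_iff by auto
    have uF: "trep X \<in> freeT lM" and uX: "cl (trep X) = X" using tensor_trep[OF bim Xt] by auto
    have "pr (trep X) = trep X - t 0" unfolding pr_def using evX unfolding ev_def by simp
    moreover have "cl (trep X - t 0) = cl (trep X)"
      by (rule tcls_eq[OF bim uF]) (use H_neg[OF bim t0] in simp)
    ultimately show ?thesis unfolding Phi_def using uX by simp
  qed

  define chi where "chi fd = (\<lambda>m. Phi (delta (m, fd)))" for fd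
  have chi_lhom: "chi fd \<in> lhom lM lZ" if fd: "fd \<in> dual lM" for fd
  proof -
    have "Phi (delta (x + y, fd)) = Phi (delta (x, fd)) + Phi (delta (y, fd))" for x y
    proof -
      have "delta (x + y, fd) - (delta (x, fd) + delta (y, fd)) \<in> HQ" using rel1[OF bim fd, of x y] by (simp add: algebra_simps)
      moreover have "delta (x + y, fd) \<in> freeT lM" by (rule freeT_delta[OF bim]) (simp add: fd)
      moreover have "delta (x, fd) + delta (y, fd) \<in> freeT lM"
        by (intro freeT_add[OF bim] freeT_delta[OF bim]) (simp_all add: fd)
      ultimately have "Phi (delta (x + y, fd)) = Phi (delta (x, fd) + delta (y, fd))"
        using Phi_cong by blast
      then show ?thesis using Phi_add[OF freeT_delta[OF bim, of "(x, fd)"] freeT_delta[OF bim, of "(y, fd)"]] fd by simp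
    qed
    moreover have "Phi (delta (lM b x, fd)) = lZ b (Phi (delta (x, fd)))" for b x
      using Phi_L[OF freeT_delta[OF bim, of "(x, fd)"], of b] fd by (simp add: push_delta)
    ultimately show ?thesis unfolding lhom_def chi_def by simp
  qed
  have chi_add: "chi (fd + fd') = chi fd + chi fd'" if fd: "fd \<in> dual lM" "fd' \<in> dual lM" for fd fd'
  proof (rule ext)
    fix m
    have "delta (m, fd + fd') - (delta (m, fd) + delta (m, fd')) \<in> HQ" using rel2[OF bim fd, of m] by (simp add: algebra_simps)
    moreover have "delta (m, fd + fd') \<in> freeT lM" by (rule freeT_delta[OF bim]) (simp add: fd dual_add[OF bim])
    moreover have "delta (m, fd) + delta (m, fd') \<in> freeT lM"
      by (intro freeT_add[OF bim] freeT_delta[OF bim]) (simp_all add: fd)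
    ultimately have "Phi (delta (m, fd + fd')) = Phi (delta (m, fd) + delta (m, fd'))"
      using Phi_cong by blast
    then show "chi (fd + fd') m = (chi fd + chi fd') m"
      unfolding chi_def using Phi_add[OF freeT_delta[OF bim, of "(m, fd)"] freeT_delta[OF bim, of "(m, fd')"]] fd by simp
  qed
  have chi_lact: "chi (hom_lact rM a fd) = hom_lact rM a (chi fd)" if fd: "fd \<in> dual lM" for fd a
  proof (rule ext)
    fix m
    have "delta (rM m a, fd) \<in> freeT lM" by (rule freeT_delta[OF bim]) (simp add: fd)
    moreover have "delta (m, hom_lact rM a fd) \<in> freeT lM" by (rule freeT_delta[OF bim]) (simp add: fd dual_lact[OF bim])
    ultimately have "Phi (delta (rM m a, fd)) = Phi (delta (m, hom_lact rM a fd))"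
      using Phi_cong rel3[OF bim fd] by blast
    then show "chi (hom_lact rM a fd) m = hom_lact rM a (chi fd) m" unfolding chi_def hom_lact_def by simp
  qed
  have chi_ract: "chi (hom_ract (*) fd b) = hom_ract rZ (chi fd) b" if fd: "fd \<in> dual lM" for fd b
  proof (rule ext)
    fix m
    show "chi (hom_ract (*) fd b) m = hom_ract rZ (chi fd) b m"
      unfolding chi_def hom_ract_def using Phi_R[OF freeT_delta[OF bim, of "(m, fd)"], of b] fd
      by (simp add: push_delta hom_ract_def)
  qed

  define G where "G x = g (chi (snd x)) (fst x)" for x
  define Psi where "Psi u = lin lY G u" for u
  have Psi_add: "Psi (u + v) = Psi u + Psi v" if "fs u" "fs v" for u v
    unfolding Psi_def by (rule lin_add[OF bY that])
  have Psi_diff: "Psi (u - v) = Psi u - Psi v" if "fs u" "fs v" for u v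
    unfolding Psi_def by (rule lin_diff[OF bY that])
  have Psi_delta: "Psi (delta x) = G x" for x unfolding Psi_def by (rule lin_delta[OF bY])
  have Psi_rels: "Psi w = 0" if "w \<in> tens_rels lM rM" for w
    using that
  proof (rule rels_cases[OF bim])
    fix m m' fd assume fd: "fd \<in> dual lM" and w: "w = delta (m + m', fd) - delta (m, fd) - delta (m', fd)"
    have "G (m + m', fd) = G (m, fd) + G (m', fd)"
      unfolding G_def using lhomD(1)[OF g_lhom[OF chi_lhom[OF fd]]] by simp
    then show "Psi w = 0" unfolding w by (simp add: Psi_diff fs_diff fs_delta Psi_delta)
  next
    fix m fd fd' assume fd: "fd \<in> dual lM" "fd' \<in> dual lM" and w: "w = delta (m, fd + fd') - delta (m, fd) - delta (m, fd')"
    have "G (m, fd + fd') = G (m, fd) + G (m, fd')"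
      unfolding G_def using chi_add[OF fd] g_add[OF chi_lhom[OF fd(1)] chi_lhom[OF fd(2)]] by simp
    then show "Psi w = 0" unfolding w by (simp add: Psi_diff fs_diff fs_delta Psi_delta)
  next
    fix m a fd assume fd: "fd \<in> dual lM" and w: "w = delta (rM m a, fd) - delta (m, hom_lact rM a fd)"
    have "G (rM m a, fd) = G (m, hom_lact rM a fd)"
      unfolding G_def using chi_lact[OF fd] g_lact[OF chi_lhom[OF fd]] by (simp add: hom_lact_def)
    then show "Psi w = 0" unfolding w by (simp add: Psi_diff fs_diff fs_delta Psi_delta)
  qed
  have Psi_H: "Psi w = 0" if "w \<in> HQ" for w
    by (rule gen_kill[OF rels_fs[OF bim] Psi_add Psi_rels that])
  have Psi_cl: "Psi (trep (cl u)) = Psi u" if u: "u \<in> freeT lM" for u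
  proof -
    have "Psi u - Psi (trep (cl u)) = 0"
      using Psi_diff[OF freeT_fs[OF bim u] freeT_fs[OF bim trep_tcls(1)[OF bim u]]] Psi_H[OF trep_tcls(2)[OF bim u]] by simp
    then show ?thesis by simp
  qed
  have Psi_L: "Psi (push (\<lambda>(m, f). (lM b m, f)) u) = lY b (Psi u)" if u: "u \<in> freeT lM" for u b
  proof -
    have "Psi (push (\<lambda>(m, f). (lM b m, f)) u) = (\<Sum>x\<in>{x. u x \<noteq> 0}. lY (of_int (u x)) (G (lM b (fst x), snd x)))"
      unfolding Psi_def by (simp add: lin_push[OF bY freeT_fs[OF bim u]] case_prod_beta)
    also have "\<dots> = (\<Sum>x\<in>{x. u x \<noteq> 0}. lY b (lY (of_int (u x)) (G x)))"
    proof (intro sum.cong refl)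
      fix x assume "x \<in> {x. u x \<noteq> 0}"
      then have "snd x \<in> dual lM" using u unfolding freeT_iff[OF bim] by blast
      then have "G (lM b (fst x), snd x) = lY b (G x)"
        unfolding G_def using lhomD(2)[OF g_lhom[OF chi_lhom]] by simp
      moreover have "lY (of_int k) (lY b y) = lY b (lY (of_int k) y)" for k y
        by (metis bim_l_mult[OF bY] mult_of_int_commute)
      ultimately show "lY (of_int (u x)) (G (lM b (fst x), snd x)) = lY b (lY (of_int (u x)) (G x))" by simp
    qed
    also have "\<dots> = lY b (Psi u)" unfolding Psi_def lin_def by (simp add: bim_l_sum[OF bY])
    finally show ?thesis .
  qed
  have Psi_R: "Psi (push (\<lambda>(m, f). (m, hom_ract (*) f b)) u) = rY (Psi u) b" if u: "u \<in> freeT lM" for u b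
  proof -
    have "Psi (push (\<lambda>(m, f). (m, hom_ract (*) f b)) u) = (\<Sum>x\<in>{x. u x \<noteq> 0}. lY (of_int (u x)) (G (fst x, hom_ract (*) (snd x) b)))"
      unfolding Psi_def by (simp add: lin_push[OF bY freeT_fs[OF bim u]] case_prod_beta)
    also have "\<dots> = (\<Sum>x\<in>{x. u x \<noteq> 0}. rY (lY (of_int (u x)) (G x)) b)"
    proof (intro sum.cong refl)
      fix x assume "x \<in> {x. u x \<noteq> 0}"
      then have sx: "snd x \<in> dual lM" using u unfolding freeT_iff[OF bim] by blast
      then have "G (fst x, hom_ract (*) (snd x) b) = rY (G x) b"
        unfolding G_def using chi_ract[OF sx] g_ract[OF chi_lhom[OF sx]] by (simp add: hom_ract_def)
      then show "lY (of_int (u x)) (G (fst x, hom_ract (*) (snd x) b)) = rY (lY (of_int (u x)) (G x)) b"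
        by (simp add: bim_lr[OF bY])
    qed
    also have "\<dots> = rY (Psi u) b" unfolding Psi_def lin_def by (simp add: bim_r_sum[OF bY])
    finally show ?thesis .
  qed
  have f_Psi: "f (Psi u) = Phi u" if u: "u \<in> freeT lM" for u
  proof -
    have "f (Psi u) = (\<Sum>x\<in>{x. u x \<noteq> 0}. f (lY (of_int (u x)) (G x)))"
      unfolding Psi_def lin_def by (rule add_sum[OF f_add])
    also have "\<dots> = lin lZ (\<lambda>x. Phi (delta x)) u"
      unfolding lin_def
    proof (intro sum.cong refl)
      fix x assume "x \<in> {x. u x \<noteq> 0}"
      then have sx: "snd x \<in> dual lM" using u unfolding freeT_iff[OF bim] by blast
      have "f (G x) = Phi (delta x)" unfolding G_def using gfx[OF chi_lhom[OF sx]] by (simp add: chi_def)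
      then show "f (lY (of_int (u x)) (G x)) = lZ (of_int (u x)) (Phi (delta x))" by (simp add: f_L)
    qed
    also have "\<dots> = Phi u" by (rule additive_lin[OF bZ Phi_add u, symmetric])
    finally show ?thesis .
  qed

  show ?thesis
  proof (intro exI conjI ballI)
    show "bihom (ker_ev lM rM) UNIV (tadd lM rM) (+) (tlact lM rM) lY (tract lM rM) rY (\<lambda>X. Psi (trep X))"
      unfolding bihom_def
    proof (intro conjI ballI allI)
      fix X Y assume X: "X \<in> ker_ev lM rM" and Y: "Y \<in> ker_ev lM rM"
      have uX: "trep X \<in> freeT lM" "cl (trep X) = X" using tensor_trep[OF bim] X ker_iff by auto
      have uY: "trep Y \<in> freeT lM" "cl (trep Y) = Y" using tensor_trep[OF bim] Y ker_iff by auto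
      have "tadd lM rM X Y = cl (trep X + trep Y)" using tadd_tcls[OF bim uX(1) uY(1)] uX(2) uY(2) by simp
      then show "Psi (trep (tadd lM rM X Y)) = Psi (trep X) + Psi (trep Y)"
        using Psi_cl[OF freeT_add[OF bim uX(1) uY(1)]] Psi_add[OF freeT_fs[OF bim uX(1)] freeT_fs[OF bim uY(1)]] by simp
    next
      fix b X assume X: "X \<in> ker_ev lM rM"
      have uX: "trep X \<in> freeT lM" "cl (trep X) = X" using tensor_trep[OF bim] X ker_iff by auto
      have "tlact lM rM b X = cl (push (\<lambda>(m, f). (lM b m, f)) (trep X))" using tlact_tcls[OF bim uX(1)] uX(2) by simp
      then show "Psi (trep (tlact lM rM b X)) = lY b (Psi (trep X))"
        using Psi_cl[OF freeT_push_L[OF bim uX(1)]] Psi_L[OF uX(1)] by simp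
    next
      fix b X assume X: "X \<in> ker_ev lM rM"
      have uX: "trep X \<in> freeT lM" "cl (trep X) = X" using tensor_trep[OF bim] X ker_iff by auto
      have "tract lM rM X b = cl (push (\<lambda>(m, f). (m, hom_ract (*) f b)) (trep X))" using tract_tcls[OF bim uX(1)] uX(2) by simp
      then show "Psi (trep (tract lM rM X b)) = rY (Psi (trep X)) b"
        using Psi_cl[OF freeT_push_R[OF bim uX(1)]] Psi_R[OF uX(1)] by simp
    qed simp
  next
    fix X assume X: "X \<in> ker_ev lM rM"
    have uX: "trep X \<in> freeT lM" using tensor_trep[OF bim] X ker_iff by auto
    show "f (Psi (trep X)) = \<phi> X" using f_Psi[OF uX] Phi_ker[OF X] by simp
  qed
qed

end



theorem mainTheorem6:
  fixes lM :: "'b::ring_1 \<Rightarrow> 'm::ab_group_add \<Rightarrow> 'm"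
    and rM :: "'m \<Rightarrow> 'a::ring_1 \<Rightarrow> 'm"
  assumes "bimodule lM rM"
    and "separable_bimod lM rM \<or> inj_on ev (tensor lM rM)"
  shows "formally_smooth lM rM TYPE('y::ab_group_add) TYPE('z::ab_group_add)"
  unfolding formally_smooth_def
  using assms(2) case_sep[OF assms(1)] case_inj[OF assms(1)] by blast


end
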